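(* Let $K \ge 2$ and $n \ge 1$. For any pair of label assignments $\tilde\sigma, \sigma \in \{1,\ldots,K\}^n$, define the Hamming loss $H(\tilde\sigma,\sigma) = \sum_{i=1}^n I(\tilde\sigma_i \ne \sigma_i)$ and Binder's loss \[ B(\tilde\sigma,\sigma) = \sum_{1 \le i<j \le n} \Big[ I(\tilde\sigma_i \ne \tilde\sigma_j)\, I(\sigma_i = \sigma_j) + I(\tilde\sigma_i = \tilde\sigma_j)\, I(\sigma_i \ne \sigma_j) \Big]. \] Then \[ B(\tilde\sigma,\sigma) \le H(\tilde\sigma,\sigma)\Big( n - \tfrac{1}{2} H(\tilde\sigma,\sigma) \Big). \] Moreover, if $K = 2$, then $B(\tilde\sigma,\sigma) = H(\tilde\sigma,\sigma)\big(n - H(\tilde\sigma,\sigma)\big)$.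
   Context: $I(\cdot)$ denotes the indicator function. *)

theory Defs
  imports Complex_Main
begin

text \<open>Label assignments in {1..K}^n are represented as functions nat => nat,
  with positions i in {1..n} and values in {1..K}.\<close>

definition hamming_loss :: "nat \<Rightarrow> (nat \<Rightarrow> nat) \<Rightarrow> (nat \<Rightarrow> nat) \<Rightarrow> nat" where
  "hamming_loss n st s = (\<Sum>i\<in>{1..n}. if st i \<noteq> s i then 1 else 0)"

definition binder_loss :: "nat \<Rightarrow> (nat \<Rightarrow> nat) \<Rightarrow> (nat \<Rightarrow> nat) \<Rightarrow> nat" where
  "binder_loss n st s = (\<Sum>(i,j)\<in>{(i,j). 1 \<le> i \<and> i < j \<and> j \<le> n}.
      (if st i \<noteq> st j then 1 else 0) * (if s i = s j then 1 else 0)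
    + (if st i = st j then 1 else 0) * (if s i \<noteq> s j then 1 else 0))"

end

theory Submission
  imports Defs
begin

definition bg :: "(nat \<Rightarrow> nat) \<Rightarrow> (nat \<Rightarrow> nat) \<Rightarrow> nat \<Rightarrow> nat \<Rightarrow> nat" where
  "bg st s i j = (if st i \<noteq> st j then 1 else 0) * (if s i = s j then 1 else 0)
    + (if st i = st j then 1 else 0) * (if s i \<noteq> s j then 1 else 0)"

definition PP :: "nat \<Rightarrow> (nat \<times> nat) set" where
  "PP n = {(i,j). 1 \<le> i \<and> i < j \<and> j \<le> n}"

lemma binder_alt: "binder_loss n st s = (\<Sum>(i,j)\<in>PP n. bg st s i j)"
  unfolding binder_loss_def PP_def bg_def by simp

lemma PP_fin: "finite (PP n)"
  by (rule finite_subset[of _ "{1..n} \<times> {1..n}"]) (auto simp: PP_def)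

lemma PP_Suc: "PP (Suc n) = PP n \<union> (\<lambda>i. (i, Suc n)) ` {1..n}"
  by (auto simp: PP_def)

lemma binder_Suc:
  "binder_loss (Suc n) st s = binder_loss n st s + (\<Sum>i\<in>{1..n}. bg st s i (Suc n))"
proof -
  have d: "PP n \<inter> (\<lambda>i. (i, Suc n)) ` {1..n} = {}" by (auto simp: PP_def)
  have "binder_loss (Suc n) st s = (\<Sum>(i,j)\<in>PP n. bg st s i j) + (\<Sum>(i,j)\<in>(\<lambda>i. (i, Suc n)) ` {1..n}. bg st s i j)"
    unfolding binder_alt PP_Suc by (rule sum.union_disjoint[OF PP_fin _ d]) simp
  also have "(\<Sum>(i,j)\<in>(\<lambda>i. (i, Suc n)) ` {1..n}. bg st s i j) = (\<Sum>i\<in>{1..n}. bg st s i (Suc n))"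
    by (subst sum.reindex) (auto simp: inj_on_def)
  finally show ?thesis by (simp add: binder_alt)
qed

lemma ham_Suc:
  "hamming_loss (Suc n) st s = hamming_loss n st s + (if st (Suc n) \<noteq> s (Suc n) then 1 else 0)"
  unfolding hamming_loss_def by simp

lemma ham_le: "hamming_loss n st s \<le> n"
proof -
  have "hamming_loss n st s \<le> (\<Sum>i\<in>{1..n}. (1::nat))"
    unfolding hamming_loss_def by (rule sum_mono) auto
  then show ?thesis by simp
qed

lemma ham_compl: "(\<Sum>i\<in>{1..n}. if st i = s i then 1 else 0) + hamming_loss n st s = n"
proof -
  have "(\<Sum>i\<in>{1..n}. if st i = s i then 1 else 0) + hamming_loss n st s
     = (\<Sum>i\<in>{1..n}. (if st i = s i then 1 else 0) + (if st i \<noteq> s i then 1 else 0))"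
    unfolding hamming_loss_def sum.distrib by simp
  also have "\<dots> = (\<Sum>i\<in>{1..n}. (1::nat))" by (rule sum.cong) auto
  finally show ?thesis by simp
qed

lemma bound_nat: "2 * binder_loss n st s \<le> hamming_loss n st s * (2 * n - hamming_loss n st s)"
proof (induction n)
  case 0
  have "PP 0 = {}" by (auto simp: PP_def)
  then show ?case by (simp add: binder_alt hamming_loss_def)
next
  case (Suc n)
  let ?h = "hamming_loss n st s"
  let ?c = "\<Sum>i\<in>{1..n}. bg st s i (Suc n)"
  have hn: "?h \<le> n" by (rule ham_le)
  show ?case
  proof (cases "st (Suc n) = s (Suc n)")
    case True
    have "?c \<le> ?h" unfolding hamming_loss_def
      by (rule sum_mono) (auto simp: bg_def True)
    then have c: "?c \<le> ?h" .
    have "2 * binder_loss (Suc n) st s = 2 * binder_loss n st s + 2 * ?c" by (simp add: binder_Suc)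
    also have "\<dots> \<le> ?h * (2 * n - ?h) + 2 * ?h" using Suc.IH c by simp
    also have "\<dots> = ?h * (2 * Suc n - ?h)"
    proof -
      have "int (?h * (2 * n - ?h) + 2 * ?h) = int (?h * (2 * Suc n - ?h))"
        using hn by (simp add: of_nat_diff algebra_simps)
      then show ?thesis by linarith
    qed
    finally show ?thesis using True by (simp add: ham_Suc)
  next
    case False
    have "?c \<le> (\<Sum>i\<in>{1..n}. (1::nat))" by (rule sum_mono) (auto simp: bg_def)
    then have c: "?c \<le> n" by simp
    have "2 * binder_loss (Suc n) st s = 2 * binder_loss n st s + 2 * ?c" by (simp add: binder_Suc)
    also have "\<dots> \<le> ?h * (2 * n - ?h) + 2 * n" using Suc.IH c by simp
    also have "\<dots> \<le> (?h + 1) * (2 * Suc n - (?h + 1))"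
    proof -
      obtain m where m: "2 * n - ?h = m" by blast
      have e: "2 * Suc n - (?h + 1) = m + 1" using hn m by simp
      have "2 * n = m + ?h" using hn m by simp
      then show ?thesis unfolding e m by (simp add: algebra_simps)
    qed
    finally show ?thesis using False by (simp add: ham_Suc)
  qed
qed

lemma eq_nat:
  assumes "\<forall>i\<in>{1..n}. st i \<in> {1..2}" and "\<forall>i\<in>{1..n}. s i \<in> {1..2}"
  shows "binder_loss n st s + hamming_loss n st s * hamming_loss n st s = hamming_loss n st s * n"
  using assms
proof (induction n)
  case 0
  have "PP 0 = {}" by (auto simp: PP_def)
  then show ?case by (simp add: binder_alt hamming_loss_def)
next
  case (Suc n)
  let ?h = "hamming_loss n st s"
  let ?c = "\<Sum>i\<in>{1..n}. bg st s i (Suc n)"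
  have IH: "binder_loss n st s + ?h * ?h = ?h * n" using Suc by auto
  have two: "\<And>i. 1 \<le> i \<Longrightarrow> i \<le> Suc n \<Longrightarrow> (st i = 1 \<or> st i = 2) \<and> (s i = 1 \<or> s i = 2)"
  proof -
    fix i assume "1 \<le> i" "i \<le> Suc n"
    then have "st i \<in> {1..2}" "s i \<in> {1..2}" using Suc.prems by auto
    then show "(st i = 1 \<or> st i = 2) \<and> (s i = 1 \<or> s i = 2)" by auto
  qed
  have tn: "(st (Suc n) = 1 \<or> st (Suc n) = 2) \<and> (s (Suc n) = 1 \<or> s (Suc n) = 2)" using two by simp
  show ?case
  proof (cases "st (Suc n) = s (Suc n)")
    case True
    have "?c = ?h" unfolding hamming_loss_def
    proof (rule sum.cong)
      fix i assume "i \<in> {1..n}"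
      then have "(st i = 1 \<or> st i = 2) \<and> (s i = 1 \<or> s i = 2)" using two by auto
      then show "bg st s i (Suc n) = (if st i \<noteq> s i then 1 else 0)"
        using tn True by (auto simp: bg_def)
    qed simp
    then show ?thesis using IH True by (simp add: binder_Suc ham_Suc algebra_simps)
  next
    case False
    have "?c = (\<Sum>i\<in>{1..n}. if st i = s i then 1 else 0)"
    proof (rule sum.cong)
      fix i assume "i \<in> {1..n}"
      then have "(st i = 1 \<or> st i = 2) \<and> (s i = 1 \<or> s i = 2)" using two by auto
      then show "bg st s i (Suc n) = (if st i = s i then 1 else 0)"
        using tn False by (auto simp: bg_def)
    qed simp
    then have c: "?c + ?h = n" using ham_compl by metis
    show ?thesis using IH False c by (simp add: binder_Suc ham_Suc algebra_simps)
  qed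
qed

theorem theorem3:
  fixes K n :: nat and st s :: "nat \<Rightarrow> nat"
  assumes "K \<ge> 2" and "n \<ge> 1"
    and "\<forall>i\<in>{1..n}. st i \<in> {1..K}"
    and "\<forall>i\<in>{1..n}. s i \<in> {1..K}"
  shows "real (binder_loss n st s)
           \<le> real (hamming_loss n st s) * (real n - real (hamming_loss n st s) / 2)
         \<and> (K = 2 \<longrightarrow> real (binder_loss n st s)
           = real (hamming_loss n st s) * (real n - real (hamming_loss n st s)))"
proof
  let ?h = "hamming_loss n st s" and ?b = "binder_loss n st s"
  have hn: "?h \<le> n" by (rule ham_le)
  have "real (2 * ?b) \<le> real (?h * (2 * n - ?h))" using bound_nat by (simp only: of_nat_le_iff)
  then have "2 * real ?b \<le> real ?h * (2 * real n - real ?h)" using hn by (simp add: of_nat_diff)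
  then show "real ?b \<le> real ?h * (real n - real ?h / 2)" by (simp add: algebra_simps)
  show "K = 2 \<longrightarrow> real ?b = real ?h * (real n - real ?h)"
  proof
    assume "K = 2"
    then have "?b + ?h * ?h = ?h * n" using eq_nat assms by simp
    then have "real (?b + ?h * ?h) = real (?h * n)" by simp
    then show "real ?b = real ?h * (real n - real ?h)" by (simp add: algebra_simps)
  qed
qed

end
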